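(* Let $(X,\Sigma)$ be a measurable space, $p$ a transition function on it with associated operator $A$ on $ba(X,\Sigma)$, and let $K=\{\mu_1,\dots,\mu_m\}$ be a finitely additive cycle of measures of $A$. If at least one cyclic measure $\mu_i$ is countably additive, then all cyclic measures $\mu_1,\dots,\mu_m$ and the mean measure $\frac1m\sum_{k=1}^m\mu_k$ are countably additive.
   Context: $X$ is an arbitrary infinite set and $\Sigma$ a $\sigma$-algebra of subsets of $X$ containing all one-point sets. $ba(X,\Sigma)$ denotes the space of bounded finitely additive real-valued measures on $\Sigma$. A transition function is a map $p(x,E)$, $x\in X$, $E\in\Sigma$, with $0\le p(x,E)\le 1$, $p(x,X)=1$, $p(\cdot,E)$ bounded $\Sigma$-measurable for every $E$, and $p(x,\cdot)$ countably additive for every $x$. The Markov operator is $A\mu(E)=\int_X p(x,E)\,\mu(dx)$ for $\mu\in ba(X,\Sigma)$. A cycle of measures of $A$ is a finite numbered set $K=\{\mu_1,\dots,\mu_m\}$ of pairwise different positive finitely additive measures with $A\mu_i=\mu_{i+1}$ ($1\le i\le m-1$) and $A\mu_m=\mu_1$; its mean measure is $\frac1m\sum_{k=1}^m\mu_k$. *)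

theory Defs
  imports "HOL-Analysis.Analysis"
begin

text \<open>Measures are real-valued set functions; only their values on \<Sigma> matter.\<close>

definition fin_add_measure :: "'a set \<Rightarrow> 'a set set \<Rightarrow> ('a set \<Rightarrow> real) \<Rightarrow> bool" where
  "fin_add_measure X \<Sigma> \<mu> \<longleftrightarrow>
     (\<forall>E\<in>\<Sigma>. \<forall>F\<in>\<Sigma>. E \<inter> F = {} \<longrightarrow> \<mu> (E \<union> F) = \<mu> E + \<mu> F)"

definition ba_measure :: "'a set \<Rightarrow> 'a set set \<Rightarrow> ('a set \<Rightarrow> real) \<Rightarrow> bool" where
  "ba_measure X \<Sigma> \<mu> \<longleftrightarrow> fin_add_measure X \<Sigma> \<mu> \<and> (\<exists>B. \<forall>E\<in>\<Sigma>. \<bar>\<mu> E\<bar> \<le> B)"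

definition positive_measure :: "'a set set \<Rightarrow> ('a set \<Rightarrow> real) \<Rightarrow> bool" where
  "positive_measure \<Sigma> \<mu> \<longleftrightarrow> (\<forall>E\<in>\<Sigma>. 0 \<le> \<mu> E)"

definition countably_additive_measure :: "'a set set \<Rightarrow> ('a set \<Rightarrow> real) \<Rightarrow> bool" where
  "countably_additive_measure \<Sigma> \<mu> \<longleftrightarrow>
     (\<forall>F::nat \<Rightarrow> 'a set. range F \<subseteq> \<Sigma> \<longrightarrow> disjoint_family F \<longrightarrow>
        (\<lambda>n. \<mu> (F n)) sums \<mu> (\<Union>n. F n))"

definition meas_partition :: "'a set \<Rightarrow> 'a set set \<Rightarrow> 'a set set \<Rightarrow> bool" where
  "meas_partition X \<Sigma> P \<longleftrightarrow> finite P \<and> P \<subseteq> \<Sigma> \<and> {} \<notin> P \<and> \<Union>P = X \<and>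
     (\<forall>E\<in>P. \<forall>F\<in>P. E \<noteq> F \<longrightarrow> E \<inter> F = {})"

text \<open>Integral of a bounded measurable function with respect to a bounded finitely
  additive measure: limit of Riemann-type sums over finite measurable partitions on whose
  cells the oscillation of f is small.\<close>
definition ba_integral :: "'a set \<Rightarrow> 'a set set \<Rightarrow> ('a set \<Rightarrow> real) \<Rightarrow> ('a \<Rightarrow> real) \<Rightarrow> real" where
  "ba_integral X \<Sigma> \<mu> f = (THE I. \<forall>\<epsilon>>0. \<exists>\<delta>>0. \<forall>P t.
      meas_partition X \<Sigma> P \<longrightarrow> (\<forall>E\<in>P. t E \<in> E) \<longrightarrow>
      (\<forall>E\<in>P. \<forall>x\<in>E. \<forall>y\<in>E. \<bar>f x - f y\<bar> < \<delta>) \<longrightarrow>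
      \<bar>(\<Sum>E\<in>P. f (t E) * \<mu> E) - I\<bar> < \<epsilon>)"

definition transition_function :: "'a set \<Rightarrow> 'a set set \<Rightarrow> ('a \<Rightarrow> 'a set \<Rightarrow> real) \<Rightarrow> bool" where
  "transition_function X \<Sigma> p \<longleftrightarrow>
     (\<forall>x\<in>X. \<forall>E\<in>\<Sigma>. 0 \<le> p x E \<and> p x E \<le> 1) \<and>
     (\<forall>x\<in>X. p x X = 1) \<and>
     (\<forall>E\<in>\<Sigma>. \<forall>a::real. {x\<in>X. p x E \<le> a} \<in> \<Sigma>) \<and>
     (\<forall>x\<in>X. countably_additive_measure \<Sigma> (p x))"

definition markov_op :: "'a set \<Rightarrow> 'a set set \<Rightarrow> ('a \<Rightarrow> 'a set \<Rightarrow> real) \<Rightarrow> ('a set \<Rightarrow> real) \<Rightarrow> ('a set \<Rightarrow> real)" where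
  "markov_op X \<Sigma> p \<mu> = (\<lambda>E. ba_integral X \<Sigma> \<mu> (\<lambda>x. p x E))"

definition meas_eq :: "'a set set \<Rightarrow> ('a set \<Rightarrow> real) \<Rightarrow> ('a set \<Rightarrow> real) \<Rightarrow> bool" where
  "meas_eq \<Sigma> \<mu> \<nu> \<longleftrightarrow> (\<forall>E\<in>\<Sigma>. \<mu> E = \<nu> E)"

definition measure_cycle :: "'a set \<Rightarrow> 'a set set \<Rightarrow> ('a \<Rightarrow> 'a set \<Rightarrow> real) \<Rightarrow> nat \<Rightarrow> (nat \<Rightarrow> 'a set \<Rightarrow> real) \<Rightarrow> bool" where
  "measure_cycle X \<Sigma> p m \<mu> \<longleftrightarrow> 1 \<le> m \<and>
     (\<forall>i\<in>{1..m}. ba_measure X \<Sigma> (\<mu> i) \<and> positive_measure \<Sigma> (\<mu> i)) \<and>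
     (\<forall>i\<in>{1..m}. \<forall>j\<in>{1..m}. i \<noteq> j \<longrightarrow> \<not> meas_eq \<Sigma> (\<mu> i) (\<mu> j)) \<and>
     (\<forall>i\<in>{1..<m}. meas_eq \<Sigma> (markov_op X \<Sigma> p (\<mu> i)) (\<mu> (Suc i))) \<and>
     meas_eq \<Sigma> (markov_op X \<Sigma> p (\<mu> m)) (\<mu> 1)"

definition mean_measure :: "nat \<Rightarrow> (nat \<Rightarrow> 'a set \<Rightarrow> real) \<Rightarrow> 'a set \<Rightarrow> real" where
  "mean_measure m \<mu> = (\<lambda>E. (\<Sum>k=1..m. \<mu> k E) / real m)"

end

theory Submission
  imports Defs
begin


lemma M_setup:
  fixes X :: "'a set" and \<Sigma> and \<mu> :: "'a set \<Rightarrow> real"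
  assumes sa: "sigma_algebra X \<Sigma>" and fa: "fin_add_measure X \<Sigma> \<mu>"
    and pos: "positive_measure \<Sigma> \<mu>" and ca: "countably_additive_measure \<Sigma> \<mu>"
  defines "M \<equiv> measure_of X \<Sigma> (\<lambda>E. ennreal (\<mu> E))"
  shows "space M = X" "sets M = \<Sigma>" "\<And>E. E \<in> \<Sigma> \<Longrightarrow> emeasure M E = ennreal (\<mu> E)"
    "\<And>E. E \<in> \<Sigma> \<Longrightarrow> measure M E = \<mu> E" "finite_measure M"
proof -
  interpret sigma_algebra X \<Sigma> by fact
  show sp: "space M = X" unfolding M_def using space_closed by (simp add: space_measure_of_conv)
  show st: "sets M = \<Sigma>" unfolding M_def using space_closed sigma_sets_eq by (simp add: sets_measure_of)
  have e0: "\<mu> {} = 0" using fa unfolding fin_add_measure_def by (metis empty_sets inf_bot_left sup_bot_left add_cancel_right_right)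
  have "positive \<Sigma> (\<lambda>E. ennreal (\<mu> E))" unfolding positive_def using e0 by simp
  moreover have "countably_additive \<Sigma> (\<lambda>E. ennreal (\<mu> E))"
    unfolding countably_additive_def
  proof (intro allI impI)
    fix A :: "nat \<Rightarrow> 'a set" assume A: "range A \<subseteq> \<Sigma>" "disjoint_family A" "\<Union> (range A) \<in> \<Sigma>"
    have s: "(\<lambda>n. \<mu> (A n)) sums \<mu> (\<Union>n. A n)" using ca A unfolding countably_additive_measure_def by blast
    have "(\<Sum>i. ennreal (\<mu> (A i))) = ennreal (\<Sum>i. \<mu> (A i))"
      using pos A s by (intro suminf_ennreal2) (auto simp: positive_measure_def sums_iff)
    then show "(\<Sum>i. ennreal (\<mu> (A i))) = ennreal (\<mu> (\<Union> (range A)))" using s by (simp add: sums_iff)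
  qed
  ultimately have em: "\<And>E. E \<in> \<Sigma> \<Longrightarrow> emeasure M E = ennreal (\<mu> E)"
    unfolding M_def using emeasure_measure_of_sigma[OF sa] by blast
  then show "\<And>E. E \<in> \<Sigma> \<Longrightarrow> emeasure M E = ennreal (\<mu> E)" .
  show "\<And>E. E \<in> \<Sigma> \<Longrightarrow> measure M E = \<mu> E" using em pos by (simp add: measure_def positive_measure_def)
  show "finite_measure M" using em[of X] sp by (intro finite_measureI) auto
qed



lemma partition_exists:
  fixes f :: "'a \<Rightarrow> real"
  assumes sp: "space M = X" and st: "sets M = \<Sigma>" and fm: "f \<in> borel_measurable M"
    and bd: "\<And>x. x \<in> X \<Longrightarrow> \<bar>f x\<bar> \<le> B" and d: "\<delta> > 0"
  shows "\<exists>P t. meas_partition X \<Sigma> P \<and> (\<forall>E\<in>P. t E \<in> E) \<and>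
      (\<forall>E\<in>P. \<forall>x\<in>E. \<forall>y\<in>E. \<bar>f x - f y\<bar> < \<delta>)"
proof -
  define \<eta> where "\<eta> = \<delta> / 2"
  have eta: "\<eta> > 0" using d by (simp add: \<eta>_def)
  define C where "C k = {x\<in>X. \<lfloor>f x / \<eta>\<rfloor> = k}" for k :: int
  define N where "N = \<lceil>B / \<eta>\<rceil> + 1"
  define P where "P = C ` {-N..N} - {{}}"
  define t where "t E = (SOME x. x \<in> E)" for E :: "'a set"
  have g: "(\<lambda>x. f x / \<eta>) \<in> borel_measurable M" using fm by measurable
  have Cm: "C k \<in> \<Sigma>" for k
  proof -
    have "C k = (\<lambda>x. f x / \<eta>) -` {real_of_int k..<real_of_int k + 1} \<inter> space M"
      unfolding C_def sp by (auto simp only: floor_eq_iff vimage_def atLeastLessThan_iff mem_Collect_eq Int_iff)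
    also have "\<dots> \<in> sets M" by (rule measurable_sets[OF g]) auto
    finally show ?thesis using st by simp
  qed
  have "meas_partition X \<Sigma> P"
    unfolding meas_partition_def
  proof (intro conjI ballI impI)
    show "finite P" unfolding P_def by simp
    show "P \<subseteq> \<Sigma>" unfolding P_def using Cm by auto
    show "{} \<notin> P" unfolding P_def by simp
    show "\<Union> P = X"
    proof
      show "\<Union> P \<subseteq> X" unfolding P_def C_def by auto
      show "X \<subseteq> \<Union> P"
      proof
        fix x assume x: "x \<in> X"
        define k where "k = \<lfloor>f x / \<eta>\<rfloor>"
        have "\<bar>f x / \<eta>\<bar> = \<bar>f x\<bar> / \<eta>" using eta by (simp add: abs_divide)
        also have "\<dots> \<le> B / \<eta>" using bd[OF x] eta by (intro divide_right_mono) auto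
        finally have b1: "\<bar>f x / \<eta>\<bar> \<le> B / \<eta>" .
        have c1: "of_int k \<le> f x / \<eta>" unfolding k_def by (rule of_int_floor_le)
        have c2: "f x / \<eta> < of_int k + 1" unfolding k_def by (rule real_of_int_floor_add_one_gt)
        have c3: "B / \<eta> \<le> of_int \<lceil>B / \<eta>\<rceil>" by (rule le_of_int_ceiling)
        have "real_of_int (-N) \<le> real_of_int k \<and> real_of_int k \<le> real_of_int N"
        proof -
          have b2: "- (B / \<eta>) \<le> f x / \<eta>" "f x / \<eta> \<le> B / \<eta>" using b1 unfolding abs_le_iff by linarith+
          show ?thesis unfolding N_def of_int_add of_int_minus of_int_1 using b2 c1 c2 c3 by linarith
        qed
        then have "-N \<le> k \<and> k \<le> N" by (simp only: of_int_le_iff)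
        moreover have "x \<in> C k" using x unfolding C_def k_def by blast
        ultimately have "k \<in> {-N..N}" "C k \<notin> {{}}" by auto
        then have "C k \<in> P" unfolding P_def by (rule DiffI[OF imageI])
        then show "x \<in> \<Union> P" using \<open>x \<in> C k\<close> by blast
      qed
    qed
    fix E F assume "E \<in> P" "F \<in> P" "E \<noteq> F"
    then obtain k l where "E = C k" "F = C l" "k \<noteq> l" unfolding P_def by blast
    then show "E \<inter> F = {}" unfolding C_def by blast
  qed
  moreover have "\<forall>E\<in>P. t E \<in> E" unfolding P_def t_def by (metis (no_types, lifting) Diff_iff equals0I singletonI someI)
  moreover have "\<forall>E\<in>P. \<forall>x\<in>E. \<forall>y\<in>E. \<bar>f x - f y\<bar> < \<delta>"
  proof (intro ballI)
    fix E x y assume "E \<in> P" "x \<in> E" "y \<in> E"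
    then obtain k where "E = C k" unfolding P_def by blast
    then have "\<lfloor>f x / \<eta>\<rfloor> = k" "\<lfloor>f y / \<eta>\<rfloor> = k" using \<open>x \<in> E\<close> \<open>y \<in> E\<close> unfolding C_def by blast+
    then have "of_int k \<le> f x / \<eta>" "f x / \<eta> < of_int k + 1" "of_int k \<le> f y / \<eta>" "f y / \<eta> < of_int k + 1"
      unfolding floor_eq_iff by blast+
    then have "\<bar>f x / \<eta> - f y / \<eta>\<bar> < 1" by linarith
    moreover have "f x - f y = \<eta> * (f x / \<eta> - f y / \<eta>)" using eta by (simp add: field_simps)
    ultimately have "\<bar>f x - f y\<bar> < \<eta> * 1" using eta by (simp only: abs_mult) (metis abs_of_pos mult_strict_left_mono)
    then have "\<bar>f x - f y\<bar> < \<eta>" by simp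
    then show "\<bar>f x - f y\<bar> < \<delta>" using eta unfolding \<eta>_def by simp
  qed
  ultimately show ?thesis by blast
qed



lemma ba_integral_eq:
  fixes f :: "'a \<Rightarrow> real" and X :: "'a set" and \<mu> :: "'a set \<Rightarrow> real"
  assumes sp: "space M = X" and st: "sets M = \<Sigma>" and em: "\<And>E. E \<in> \<Sigma> \<Longrightarrow> measure M E = \<mu> E"
    and fin: "finite_measure M"
    and fm: "f \<in> borel_measurable M" and bd: "\<And>x. x \<in> X \<Longrightarrow> \<bar>f x\<bar> \<le> B"
  shows "ba_integral X \<Sigma> \<mu> f = integral\<^sup>L M f"
proof -
  interpret finite_measure M by fact
  define J where "J = integral\<^sup>L M f"
  define Q where "Q I \<longleftrightarrow> (\<forall>\<epsilon>>0. \<exists>\<delta>>0. \<forall>P t.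
      meas_partition X \<Sigma> P \<longrightarrow> (\<forall>E\<in>P. t E \<in> E) \<longrightarrow>
      (\<forall>E\<in>P. \<forall>x\<in>E. \<forall>y\<in>E. \<bar>f x - f y\<bar> < \<delta>) \<longrightarrow>
      \<bar>(\<Sum>E\<in>P. f (t E) * \<mu> E) - I\<bar> < \<epsilon>)" for I
  have int_f: "integrable M f"
    by (rule integrable_const_bound[where B=B]) (auto intro!: AE_I2 simp: sp bd fm)
  have QJ: "Q J" unfolding Q_def
  proof (intro allI impI)
    fix \<epsilon> :: real assume e: "\<epsilon> > 0"
    define mX where "mX = measure M X"
    have mX0: "mX \<ge> 0" unfolding mX_def by simp
    define \<delta> where "\<delta> = \<epsilon> / (mX + 1)"
    have d0: "\<delta> > 0" using e mX0 unfolding \<delta>_def by simp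
    have dlt: "mX * \<delta> < \<epsilon>"
    proof -
      have "mX * \<delta> = \<epsilon> * (mX / (mX + 1))" unfolding \<delta>_def by simp
      also have "\<dots> < \<epsilon> * 1" using e mX0 by (intro mult_strict_left_mono) auto
      finally show ?thesis by simp
    qed
    show "\<exists>\<delta>>0. \<forall>P t. meas_partition X \<Sigma> P \<longrightarrow> (\<forall>E\<in>P. t E \<in> E) \<longrightarrow>
      (\<forall>E\<in>P. \<forall>x\<in>E. \<forall>y\<in>E. \<bar>f x - f y\<bar> < \<delta>) \<longrightarrow>
      \<bar>(\<Sum>E\<in>P. f (t E) * \<mu> E) - J\<bar> < \<epsilon>"
    proof (intro exI[of _ \<delta>] conjI allI impI d0)
      fix P t assume mp: "meas_partition X \<Sigma> P" and tg: "\<forall>E\<in>P. t E \<in> E"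
        and osc: "\<forall>E\<in>P. \<forall>x\<in>E. \<forall>y\<in>E. \<bar>f x - f y\<bar> < \<delta>"
      have finP: "finite P" and PS: "P \<subseteq> \<Sigma>" and UP: "\<Union>P = X"
        and dj: "\<And>E F. E \<in> P \<Longrightarrow> F \<in> P \<Longrightarrow> E \<noteq> F \<Longrightarrow> E \<inter> F = {}"
        using mp unfolding meas_partition_def by blast+
      have int_ind: "integrable M (\<lambda>x. f (t E) * indicator E x)" if "E \<in> P" for E
        using that PS st by (intro integrable_mult_right integrable_real_indicator) (auto simp: less_top[symmetric])
      define h where "h x = (\<Sum>E\<in>P. f (t E) * indicator E x)" for x
      have int_h: "integrable M h" unfolding h_def using int_ind by (rule Bochner_Integration.integrable_sum[where f="\<lambda>E x. f (t E) * indicator E x"])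
      have S_eq: "(\<Sum>E\<in>P. f (t E) * \<mu> E) = integral\<^sup>L M h"
      proof -
        have "integral\<^sup>L M h = (\<Sum>E\<in>P. integral\<^sup>L M (\<lambda>x. f (t E) * indicator E x))"
          unfolding h_def using int_ind by (rule Bochner_Integration.integral_sum[where f="\<lambda>E x. f (t E) * indicator E x"])
        also have "\<dots> = (\<Sum>E\<in>P. f (t E) * \<mu> E)"
        proof (intro sum.cong refl)
          fix E assume "E \<in> P"
          then have "E \<in> \<Sigma>" "E \<subseteq> X" using PS UP by auto
          then show "integral\<^sup>L M (\<lambda>x. f (t E) * indicator E x) = f (t E) * \<mu> E"
            using em sp by (simp add: Int_absorb2)
        qed
        finally show ?thesis by simp
      qed
      have pw: "\<bar>h x - f x\<bar> \<le> \<delta>" if x: "x \<in> space M" for x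
      proof -
        from x sp UP obtain E0 where E0: "E0 \<in> P" "x \<in> E0" by auto
        have "h x = f (t E0) * indicator E0 x + (\<Sum>E\<in>P - {E0}. f (t E) * indicator E x)"
          unfolding h_def by (rule sum.remove[OF finP E0(1)])
        also have "(\<Sum>E\<in>P - {E0}. f (t E) * indicator E x) = 0"
        proof (intro sum.neutral ballI)
          fix E assume "E \<in> P - {E0}"
          then have "x \<notin> E" using dj[of E E0] E0 by auto
          then show "f (t E) * indicator E x = 0" by simp
        qed
        finally have "h x = f (t E0)" using E0 by simp
        then show ?thesis using osc E0 tg by (metis abs_minus_commute less_imp_le)
      qed
      have "(\<Sum>E\<in>P. f (t E) * \<mu> E) - J = integral\<^sup>L M (\<lambda>x. h x - f x)"
        unfolding S_eq J_def using int_h int_f by simp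
      also have "\<bar>\<dots>\<bar> \<le> integral\<^sup>L M (\<lambda>x. \<bar>h x - f x\<bar>)" by (rule integral_abs_bound)
      also have "\<dots> \<le> integral\<^sup>L M (\<lambda>x. \<delta>)"
        using pw int_h int_f by (intro integral_mono) auto
      also have "\<dots> = mX * \<delta>" unfolding mX_def using sp by simp
      finally show "\<bar>(\<Sum>E\<in>P. f (t E) * \<mu> E) - J\<bar> < \<epsilon>" using dlt by simp
    qed
  qed
  have uniq: "I = J" if QI: "Q I" for I
  proof (rule ccontr)
    assume ne: "I \<noteq> J"
    define \<epsilon> where "\<epsilon> = \<bar>I - J\<bar> / 2"
    have e: "\<epsilon> > 0" using ne unfolding \<epsilon>_def by simp
    obtain d1 where d1: "d1 > 0" "\<forall>P t. meas_partition X \<Sigma> P \<longrightarrow> (\<forall>E\<in>P. t E \<in> E) \<longrightarrow>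
      (\<forall>E\<in>P. \<forall>x\<in>E. \<forall>y\<in>E. \<bar>f x - f y\<bar> < d1) \<longrightarrow> \<bar>(\<Sum>E\<in>P. f (t E) * \<mu> E) - I\<bar> < \<epsilon>"
      using QI e unfolding Q_def by blast
    obtain d2 where d2: "d2 > 0" "\<forall>P t. meas_partition X \<Sigma> P \<longrightarrow> (\<forall>E\<in>P. t E \<in> E) \<longrightarrow>
      (\<forall>E\<in>P. \<forall>x\<in>E. \<forall>y\<in>E. \<bar>f x - f y\<bar> < d2) \<longrightarrow> \<bar>(\<Sum>E\<in>P. f (t E) * \<mu> E) - J\<bar> < \<epsilon>"
      using QJ e unfolding Q_def by blast
    obtain P t where Pt: "meas_partition X \<Sigma> P" "\<forall>E\<in>P. t E \<in> E"
      "\<forall>E\<in>P. \<forall>x\<in>E. \<forall>y\<in>E. \<bar>f x - f y\<bar> < min d1 d2"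
      using partition_exists[OF sp st fm bd, of "min d1 d2"] d1 d2 by auto
    have "\<bar>(\<Sum>E\<in>P. f (t E) * \<mu> E) - I\<bar> < \<epsilon>" using d1(2) Pt by auto
    moreover have "\<bar>(\<Sum>E\<in>P. f (t E) * \<mu> E) - J\<bar> < \<epsilon>" using d2(2) Pt by auto
    ultimately show False unfolding \<epsilon>_def by (smt (verit) abs_triangle_ineq4 field_sum_of_halves)
  qed
  have "ba_integral X \<Sigma> \<mu> f = (THE I. Q I)" unfolding ba_integral_def Q_def by simp
  also have "\<dots> = J" using QJ uniq by (rule the_equality)
  finally show ?thesis unfolding J_def .
qed



lemma markov_ca:
  fixes X :: "'a set" and \<mu> :: "'a set \<Rightarrow> real"
  assumes sa: "sigma_algebra X \<Sigma>" and fa: "fin_add_measure X \<Sigma> \<mu>"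
    and pos: "positive_measure \<Sigma> \<mu>" and ca: "countably_additive_measure \<Sigma> \<mu>"
    and tf: "transition_function X \<Sigma> p"
  shows "countably_additive_measure \<Sigma> (markov_op X \<Sigma> p \<mu>)"
proof -
  define M where "M = measure_of X \<Sigma> (\<lambda>E. ennreal (\<mu> E))"
  note Ms = M_setup[OF sa fa pos ca, folded M_def]
  interpret finite_measure M by (rule Ms(5))
  have p01: "\<And>x E. x \<in> X \<Longrightarrow> E \<in> \<Sigma> \<Longrightarrow> 0 \<le> p x E \<and> p x E \<le> 1"
    and pme: "\<And>E a. E \<in> \<Sigma> \<Longrightarrow> {x\<in>X. p x E \<le> a} \<in> \<Sigma>"
    and pca: "\<And>x. x \<in> X \<Longrightarrow> countably_additive_measure \<Sigma> (p x)"
    using tf unfolding transition_function_def by blast+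
  have meas: "(\<lambda>x. p x E) \<in> borel_measurable M" if "E \<in> \<Sigma>" for E
    unfolding borel_measurable_iff_le Ms(1) Ms(2) using pme[OF that] by blast
  have mo: "markov_op X \<Sigma> p \<mu> E = integral\<^sup>L M (\<lambda>x. p x E)" if "E \<in> \<Sigma>" for E
  proof -
    have b: "\<bar>p x E\<bar> \<le> 1" if "x \<in> X" for x
      using p01[OF that \<open>E \<in> \<Sigma>\<close>] by simp
    show ?thesis unfolding markov_op_def
      by (rule ba_integral_eq[OF Ms(1) Ms(2) Ms(4) Ms(5) meas[OF that] b])
  qed
  show ?thesis unfolding countably_additive_measure_def
  proof (intro allI impI)
    fix F :: "nat \<Rightarrow> 'a set" assume F: "range F \<subseteq> \<Sigma>" "disjoint_family F"
    have U: "(\<Union>n. F n) \<in> \<Sigma>" using F sa by (meson sigma_algebra.countable_UN)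
    have Fn: "F n \<in> \<Sigma>" for n using F by auto
    have psum: "(\<lambda>n. p x (F n)) sums p x (\<Union>n. F n)" if "x \<in> X" for x
      using pca[OF that] F unfolding countably_additive_measure_def by blast
    have "(\<lambda>N. integral\<^sup>L M (\<lambda>x. \<Sum>n<N. p x (F n))) \<longlonglongrightarrow> integral\<^sup>L M (\<lambda>x. p x (\<Union>n. F n))"
    proof (rule integral_dominated_convergence[where w="\<lambda>_. 1"])
      show "(\<lambda>x. p x (\<Union>n. F n)) \<in> borel_measurable M" using meas[OF U] .
      show "(\<lambda>x. \<Sum>n<N. p x (F n)) \<in> borel_measurable M" for N
        using meas[OF Fn] by (rule borel_measurable_sum)
      show "integrable M (\<lambda>_. 1::real)" by simp
      show "AE x in M. (\<lambda>N. \<Sum>n<N. p x (F n)) \<longlonglongrightarrow> p x (\<Union>n. F n)"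
        using psum Ms(1) by (intro AE_I2) (simp add: sums_def)
      show "AE x in M. norm (\<Sum>n<N. p x (F n)) \<le> 1" for N
      proof (intro AE_I2)
        fix x assume "x \<in> space M"
        then have x: "x \<in> X" using Ms(1) by simp
        have nn: "0 \<le> (\<Sum>n<N. p x (F n))" using p01[OF x Fn] by (simp add: sum_nonneg)
        have "(\<Sum>n<N. p x (F n)) \<le> (\<Sum>n. p x (F n))"
          using psum[OF x] p01[OF x Fn] by (intro sum_le_suminf) (auto simp: sums_iff)
        also have "\<dots> = p x (\<Union>n. F n)" using psum[OF x] by (simp add: sums_iff)
        also have "\<dots> \<le> 1" using p01[OF x U] by simp
        finally show "norm (\<Sum>n<N. p x (F n)) \<le> 1" using nn by simp
      qed
    qed
    moreover have "integral\<^sup>L M (\<lambda>x. \<Sum>n<N. p x (F n)) = (\<Sum>n<N. markov_op X \<Sigma> p \<mu> (F n))" for N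
    proof -
      have "integral\<^sup>L M (\<lambda>x. \<Sum>n<N. p x (F n)) = (\<Sum>n<N. integral\<^sup>L M (\<lambda>x. p x (F n)))"
        by (rule Bochner_Integration.integral_sum[where f="\<lambda>n x. p x (F n)"])
           (rule integrable_const_bound[where B=1], use p01 Fn Ms(1) meas in auto)
      then show ?thesis using mo[OF Fn] by simp
    qed
    ultimately show "(\<lambda>n. markov_op X \<Sigma> p \<mu> (F n)) sums markov_op X \<Sigma> p \<mu> (\<Union>n. F n)"
      unfolding sums_def using mo[OF U] by simp
  qed
qed

lemma ca_cong:
  assumes sa: "sigma_algebra X \<Sigma>" and eq: "meas_eq \<Sigma> \<mu> \<nu>" and ca: "countably_additive_measure \<Sigma> \<mu>"
  shows "countably_additive_measure \<Sigma> \<nu>"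
  unfolding countably_additive_measure_def
proof (intro allI impI)
  fix F :: "nat \<Rightarrow> _" assume F: "range F \<subseteq> \<Sigma>" "disjoint_family F"
  have U: "(\<Union>n. F n) \<in> \<Sigma>" using F sa by (meson sigma_algebra.countable_UN)
  have "(\<lambda>n. \<mu> (F n)) sums \<mu> (\<Union>n. F n)" using ca F unfolding countably_additive_measure_def by blast
  moreover have "\<mu> (F n) = \<nu> (F n)" for n using eq F unfolding meas_eq_def by auto
  moreover have "\<mu> (\<Union>n. F n) = \<nu> (\<Union>n. F n)" using eq U unfolding meas_eq_def by auto
  ultimately show "(\<lambda>n. \<nu> (F n)) sums \<nu> (\<Union>n. F n)" by simp
qed

theorem theorem4p2:
  fixes X :: "'a set" and \<Sigma> :: "'a set set" and p :: "'a \<Rightarrow> 'a set \<Rightarrow> real"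
    and m :: nat and \<mu> :: "nat \<Rightarrow> 'a set \<Rightarrow> real"
  assumes "infinite X"
    and "sigma_algebra X \<Sigma>"
    and "\<forall>x\<in>X. {x} \<in> \<Sigma>"
    and "transition_function X \<Sigma> p"
    and "measure_cycle X \<Sigma> p m \<mu>"
    and "\<exists>i\<in>{1..m}. countably_additive_measure \<Sigma> (\<mu> i)"
  shows "(\<forall>i\<in>{1..m}. countably_additive_measure \<Sigma> (\<mu> i))
         \<and> countably_additive_measure \<Sigma> (mean_measure m \<mu>)"
proof -
  note sa = assms(2) and tf = assms(4)
  have m1: "1 \<le> m" and bp: "\<And>i. i \<in> {1..m} \<Longrightarrow> ba_measure X \<Sigma> (\<mu> i) \<and> positive_measure \<Sigma> (\<mu> i)"
    and nx: "\<And>i. i \<in> {1..<m} \<Longrightarrow> meas_eq \<Sigma> (markov_op X \<Sigma> p (\<mu> i)) (\<mu> (Suc i))"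
    and lst: "meas_eq \<Sigma> (markov_op X \<Sigma> p (\<mu> m)) (\<mu> 1)"
    using assms(5) unfolding measure_cycle_def by blast+
  have step: "countably_additive_measure \<Sigma> (markov_op X \<Sigma> p (\<mu> i))"
    if "i \<in> {1..m}" "countably_additive_measure \<Sigma> (\<mu> i)" for i
    using bp[OF that(1)] that(2) by (intro markov_ca[OF sa _ _ _ tf]) (auto simp: ba_measure_def)
  obtain i0 where i0: "i0 \<in> {1..m}" "countably_additive_measure \<Sigma> (\<mu> i0)" using assms(6) by blast
  have up: "countably_additive_measure \<Sigma> (\<mu> (i + k))"
    if "i \<in> {1..m}" "i + k \<le> m" "countably_additive_measure \<Sigma> (\<mu> i)" for i k
    using that
  proof (induction k)
    case 0 then show ?case by simp
  next
    case (Suc k)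
    then have ih: "countably_additive_measure \<Sigma> (\<mu> (i + k))" by simp
    have "i + k \<in> {1..<m}" using Suc.prems by auto
    then show ?case using ca_cong[OF sa nx step[OF _ ih]] by auto
  qed
  have "countably_additive_measure \<Sigma> (\<mu> m)" using up[OF i0(1) _ i0(2), of "m - i0"] i0(1) by auto
  then have c1: "countably_additive_measure \<Sigma> (\<mu> 1)" using ca_cong[OF sa lst step] m1 by auto
  have all: "\<forall>i\<in>{1..m}. countably_additive_measure \<Sigma> (\<mu> i)"
  proof
    fix i assume i: "i \<in> {1..m}"
    then show "countably_additive_measure \<Sigma> (\<mu> i)" using up[OF _ _ c1, of "i - 1"] m1 by auto
  qed
  moreover have "countably_additive_measure \<Sigma> (mean_measure m \<mu>)"
    unfolding countably_additive_measure_def mean_measure_def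
  proof (intro allI impI)
    fix F :: "nat \<Rightarrow> _" assume F: "range F \<subseteq> \<Sigma>" "disjoint_family F"
    have "(\<lambda>n. \<Sum>k=1..m. \<mu> k (F n)) sums (\<Sum>k=1..m. \<mu> k (\<Union>n. F n))"
      using all F unfolding countably_additive_measure_def by (intro sums_sum) auto
    then show "(\<lambda>n. (\<Sum>k=1..m. \<mu> k (F n)) / real m) sums ((\<Sum>k=1..m. \<mu> k (\<Union>n. F n)) / real m)"
      by (rule sums_divide)
  qed
  ultimately show ?thesis by blast
qed

end
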